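(* For any $0\leq p_0\leq p_1\leq 1$ and $\alpha\in[0,1]$, \[ h_2(\alpha p_0+(1-\alpha)p_1)-\alpha h_2(p_0)-(1-\alpha)h_2(p_1)\leq \min\left\{p_1-p_0,\ \frac{(p_1-p_0)^2}{2\min\{p_0,1-p_1\}}\right\}. \]
   Context: $h_2(p)=-p\log p-(1-p)\log(1-p)$ is the binary entropy function with natural logarithm. *)

theory Defs
  imports Complex_Main
begin

definition xlnx :: "real \<Rightarrow> real" where
  "xlnx x = (if x = 0 then 0 else x * ln x)"

definition h2 :: "real \<Rightarrow> real" where
  "h2 p = - xlnx p - xlnx (1 - p)"

end

theory Submission
  imports Defs
begin

lemma xlnx_le: assumes "0 \<le> y" "0 < x" shows "xlnx y - y * ln x \<le> y * (y / x - 1)"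
proof (cases "y = 0")
  case True then show ?thesis by (simp add: xlnx_def)
next
  case False
  then have y: "y > 0" using assms by simp
  have "ln (y / x) \<le> y / x - 1" using y assms by (intro ln_le_minus_one) simp
  moreover have "ln (y/x) = ln y - ln x" using y assms by (simp add: ln_div)
  ultimately have "y * (ln y - ln x) \<le> y * (y / x - 1)" using y by (intro mult_left_mono) auto
  then show ?thesis using False by (simp add: xlnx_def algebra_simps)
qed

lemma gapL:
  fixes x0 x1 a :: real
  assumes "0 \<le> x0" "0 \<le> x1" "0 \<le> a" "a \<le> 1" and x: "0 < a * x0 + (1 - a) * x1"
  shows "- xlnx (a * x0 + (1 - a) * x1) + a * xlnx x0 + (1 - a) * xlnx x1
         \<le> a * (1 - a) * (x1 - x0)^2 / (a * x0 + (1 - a) * x1)"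
proof -
  define x where "x = a * x0 + (1 - a) * x1"
  have xp: "x > 0" using x x_def by simp
  have e: "xlnx x = x * ln x" using xp by (simp add: xlnx_def)
  have "- xlnx x + a * xlnx x0 + (1 - a) * xlnx x1
      = a * (xlnx x0 - x0 * ln x) + (1 - a) * (xlnx x1 - x1 * ln x)"
  proof -
    have hx: "x * ln x = a * (x0 * ln x) + (1 - a) * (x1 * ln x)" by (simp add: x_def algebra_simps)
    show ?thesis by (subst e, subst hx, simp add: algebra_simps)
  qed
  also have "\<dots> \<le> a * (x0 * (x0 / x - 1)) + (1 - a) * (x1 * (x1 / x - 1))"
    using assms xp xlnx_le by (intro add_mono mult_left_mono) auto
  also have "\<dots> = a * x0^2 / x + (1 - a) * x1^2 / x - (a * x0 + (1 - a) * x1)"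
    by (simp add: algebra_simps power2_eq_square)
  also have "\<dots> = a * x0^2 / x + (1 - a) * x1^2 / x - x^2 / x"
    using xp by (simp add: x_def[symmetric] power2_eq_square)
  also have "\<dots> = (a * x0^2 + (1 - a) * x1^2 - x^2) / x"
    by (simp add: diff_divide_distrib add_divide_distrib)
  also have "a * x0^2 + (1 - a) * x1^2 - x^2 = a * (1 - a) * (x1 - x0)^2"
    unfolding x_def by (simp add: algebra_simps power2_eq_square)
  finally show ?thesis unfolding x_def .
qed

lemma gap1:
  fixes x0 x1 a :: real
  assumes "0 \<le> x0" "x0 \<le> x1" "0 \<le> a" "a \<le> 1"
  shows "- xlnx (a * x0 + (1 - a) * x1) + a * xlnx x0 + (1 - a) * xlnx x1 \<le> a * (x1 - x0)"
proof (cases "a * x0 + (1 - a) * x1 = 0")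
  case True
  have "a * x0 = 0" "(1 - a) * x1 = 0"
    using True assms by (smt (verit) mult_nonneg_nonneg)+
  then have z: "a * xlnx x0 = 0" "(1 - a) * xlnx x1 = 0" by (auto simp: xlnx_def)
  have z2: "xlnx (a * x0 + (1 - a) * x1) = 0" using True by (simp add: xlnx_def)
  have "a * (x1 - x0) \<ge> 0" using assms by simp
  then show ?thesis using z z2 by linarith
next
  case False
  define x where "x = a * x0 + (1 - a) * x1"
  have xp: "x > 0" using False assms x_def
    by (smt (verit) mult_nonneg_nonneg)
  have "(1 - a) * (x1 - x0) \<le> x" unfolding x_def using assms
    by (smt (verit) mult_left_mono mult_nonneg_nonneg)
  then have "a * ((1 - a) * (x1 - x0)) * (x1 - x0) \<le> a * x * (x1 - x0)"
    using assms by (intro mult_right_mono mult_left_mono) auto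
  then have "a * (1 - a) * (x1 - x0)^2 / x \<le> a * (x1 - x0)"
    using xp by (simp add: divide_simps power2_eq_square algebra_simps)
  then show ?thesis using gapL[of x0 x1 a] assms xp unfolding x_def by linarith
qed

theorem lemma2:
  fixes p0 p1 \<alpha> :: real
  assumes "0 \<le> p0" "p0 \<le> p1" "p1 \<le> 1" "0 \<le> \<alpha>" "\<alpha> \<le> 1"
  shows "h2 (\<alpha> * p0 + (1 - \<alpha>) * p1) - \<alpha> * h2 p0 - (1 - \<alpha>) * h2 p1 \<le> p1 - p0
     \<and> (min p0 (1 - p1) > 0 \<longrightarrow>
        h2 (\<alpha> * p0 + (1 - \<alpha>) * p1) - \<alpha> * h2 p0 - (1 - \<alpha>) * h2 p1
          \<le> (p1 - p0)^2 / (2 * min p0 (1 - p1)))"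
proof -
  define p where "p = \<alpha> * p0 + (1 - \<alpha>) * p1"
  define b where "b = 1 - \<alpha>"
  have q: "1 - p = b * (1 - p1) + (1 - b) * (1 - p0)" unfolding p_def b_def by (simp add: algebra_simps)
  have G: "h2 p - \<alpha> * h2 p0 - (1 - \<alpha>) * h2 p1 =
     (- xlnx (\<alpha> * p0 + (1 - \<alpha>) * p1) + \<alpha> * xlnx p0 + (1 - \<alpha>) * xlnx p1)
   + (- xlnx (b * (1 - p1) + (1 - b) * (1 - p0)) + b * xlnx (1 - p1) + (1 - b) * xlnx (1 - p0))"
    unfolding h2_def q[symmetric] by (simp add: p_def b_def algebra_simps)
  have A: "- xlnx (\<alpha> * p0 + (1 - \<alpha>) * p1) + \<alpha> * xlnx p0 + (1 - \<alpha>) * xlnx p1 \<le> \<alpha> * (p1 - p0)"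
    using gap1 assms by auto
  have B: "- xlnx (b * (1 - p1) + (1 - b) * (1 - p0)) + b * xlnx (1 - p1) + (1 - b) * xlnx (1 - p0)
     \<le> b * ((1 - p0) - (1 - p1))"
    using gap1[of "1 - p1" "1 - p0" b] assms b_def by auto
  have part1: "h2 p - \<alpha> * h2 p0 - (1 - \<alpha>) * h2 p1 \<le> p1 - p0"
    using G A B b_def by (simp add: algebra_simps)
  have part2: "h2 p - \<alpha> * h2 p0 - (1 - \<alpha>) * h2 p1 \<le> (p1 - p0)^2 / (2 * min p0 (1 - p1))"
    if m: "min p0 (1 - p1) > 0"
  proof -
    define m where "m = min p0 (1 - p1)"
    have mp: "m > 0" using m m_def by simp
    have h1: "(1 - \<alpha>) * (p1 - p0) \<ge> 0" "\<alpha> * (p1 - p0) \<ge> 0" using assms by simp_all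
    have pm: "p \<ge> m" unfolding p_def m_def using h1
      by (simp add: min_le_iff_disj algebra_simps)
    have qm: "1 - p \<ge> m" unfolding p_def m_def using h1
      by (simp add: min_le_iff_disj algebra_simps)
    have A2: "- xlnx (\<alpha> * p0 + (1 - \<alpha>) * p1) + \<alpha> * xlnx p0 + (1 - \<alpha>) * xlnx p1
       \<le> \<alpha> * (1 - \<alpha>) * (p1 - p0)^2 / p"
      using gapL[of p0 p1 \<alpha>] assms pm mp p_def by auto
    have B2: "- xlnx (b * (1 - p1) + (1 - b) * (1 - p0)) + b * xlnx (1 - p1) + (1 - b) * xlnx (1 - p0)
       \<le> b * (1 - b) * ((1 - p0) - (1 - p1))^2 / (1 - p)"
      using gapL[of "1 - p1" "1 - p0" b] assms qm mp q b_def by auto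
    have ab0: "0 \<le> (\<alpha> - 1/2) * (\<alpha> - 1/2)" by simp
    have ab: "\<alpha> * (1 - \<alpha>) \<le> 1/4" using ab0 by (simp add: algebra_simps)
    define D where "D = (p1 - p0)^2"
    have D0: "D \<ge> 0" unfolding D_def by simp
    have c: "\<alpha> * (1 - \<alpha>) * D \<le> D / 4" using mult_right_mono[OF ab D0] by simp
    have c0: "0 \<le> \<alpha> * (1 - \<alpha>) * D" using assms D0 by simp
    have "\<alpha> * (1 - \<alpha>) * D / p \<le> (D/4) / m"
      using c c0 pm mp by (intro frac_le) auto
    moreover have "\<alpha> * (1 - \<alpha>) * D / (1 - p) \<le> (D/4) / m"
      using c c0 qm mp by (intro frac_le) auto
    moreover have "b * (1 - b) = \<alpha> * (1 - \<alpha>)" "((1 - p0) - (1 - p1))^2 = D"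
      unfolding b_def D_def by (auto simp: algebra_simps power2_eq_square)
    moreover have "(D/4)/m + (D/4)/m = D / (2 * m)" by (simp add: field_simps)
    moreover have "\<alpha> * (1 - \<alpha>) * (p1 - p0)^2 / p = \<alpha> * (1 - \<alpha>) * D / p" by (simp add: D_def)
    ultimately have "h2 p - \<alpha> * h2 p0 - (1 - \<alpha>) * h2 p1 \<le> D / (2 * m)"
      using G A2 B2 by (simp only:)
    then show ?thesis unfolding D_def m_def .
  qed
  show ?thesis using part1 part2 unfolding p_def by blast
qed

end
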